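(* Let $\Bbbk$ be an algebraically closed field of characteristic zero, let $p_0=0\le p_1\le\dots\le p_{m+n}$ be integers, and let $\Upsilon=(|1|,\dots,|m+n|)$ be a sequence consisting of $m$ zeros and $n$ ones. Given $a_i^{(r)}\in\Bbbk$ for $1\le i\le m+n$ and $1\le r\le p_i-p_{i-1}$, there exist $b_{i,j}\in\Bbbk$ for $1\le i\le m+n$, $1\le j\le p_i$, such that $$b_{i,p_i-p_{i-1}+r}=b_{i-1,r}\quad\text{for }1\le r\le p_{i-1},$$ $$e_r\big((-1)^{|i|}b_{i,1},\dots,(-1)^{|i|}b_{i,p_i}\big)=(-1)^{r|i|}a_i^{(r)}\quad\text{for }1\le r\le p_i-p_{i-1},$$ where $e_r$ denotes the $r$-th elementary symmetric polynomial. *)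

theory Defs
  imports "HOL-Computational_Algebra.Polynomial"
begin

definition esym :: "nat \<Rightarrow> 'a::comm_ring_1 list \<Rightarrow> 'a" where
  "esym r xs = (\<Sum>S\<in>{S. S \<subseteq> {0..<length xs} \<and> card S = r}. \<Prod>i\<in>S. xs ! i)"

end

theory Submission
  imports Defs
begin



lemma prod_list_nth: "prod_list (map f xs) = (\<Prod>i<length xs. f (xs!i))"
proof (induction xs)
  case (Cons x xs)
  show ?case by (simp only: length_Cons prod.lessThan_Suc_shift) (simp add: Cons)
qed simp

definition PL :: "'a::comm_ring_1 list \<Rightarrow> 'a poly" where
  "PL xs = prod_list (map (\<lambda>x. [:1, x:]) xs)"

lemma PL_append: "PL (xs @ ys) = PL xs * PL ys"
  by (simp add: PL_def)

lemma prod_monom: "finite X \<Longrightarrow> (\<Prod>i\<in>X. monom (f i) 1) = monom (\<Prod>i\<in>X. f i) (card X)"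
  by (induction X rule: finite_induct) (simp_all add: mult_monom)

lemma esym_PL: "esym r xs = coeff (PL xs) r"
proof -
  let ?A = "{..<length xs}"
  have "PL xs = (\<Prod>i\<in>?A. monom (xs!i) 1 + 1)"
    unfolding PL_def prod_list_nth
    by (intro prod.cong refl) (simp add: monom_altdef one_pCons)
  also have "\<dots> = (\<Sum>X\<in>Pow ?A. monom (\<Prod>i\<in>X. xs!i) (card X))"
  proof (subst prod_add, simp, intro sum.cong refl)
    fix X assume "X \<in> Pow ?A"
    then have "finite X" by (meson PowD finite_lessThan finite_subset)
    then show "(\<Prod>i\<in>X. monom (xs!i) 1) * (\<Prod>i\<in>?A - X. 1) = monom (\<Prod>i\<in>X. xs!i) (card X)"
      by (simp only: prod.neutral_const mult_1_right) (rule prod_monom)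
  qed
  finally have "coeff (PL xs) r = (\<Sum>X\<in>Pow ?A. if card X = r then (\<Prod>i\<in>X. xs!i) else 0)"
    by (simp add: coeff_sum coeff_monom)
  also have "\<dots> = (\<Sum>X\<in>{X\<in>Pow ?A. card X = r}. (\<Prod>i\<in>X. xs!i))"
    by (simp add: sum.inter_filter[symmetric] Pow_def)
  also have "{X\<in>Pow ?A. card X = r} = {S. S \<subseteq> {0..<length xs} \<and> card S = r}"
    by auto
  finally show ?thesis by (simp add: esym_def)
qed

lemma esym_scale: "esym r (map (\<lambda>x. c * x) xs) = c ^ r * esym r xs"
proof -
  have "esym r (map (\<lambda>x. c * x) xs) = (\<Sum>S\<in>{S. S \<subseteq> {0..<length xs} \<and> card S = r}. c ^ r * (\<Prod>i\<in>S. xs ! i))"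
    unfolding esym_def
    by (intro sum.cong refl) (auto simp: prod.distrib subset_eq)
  then show ?thesis by (simp add: esym_def sum_distrib_left)
qed

lemma PL_coeff0: "coeff (PL ys) 0 = 1"
  by (induction ys) (simp_all add: PL_def coeff_mult_0)

lemma triang:
  fixes R :: "'a::field poly"
  assumes R0: "coeff R 0 = 1"
  shows "\<exists>Q. degree Q \<le> d \<and> coeff Q 0 = 1 \<and> (\<forall>r\<in>{1..d}. coeff (Q * R) r = a r)"
proof (induction d)
  case 0
  then show ?case by (intro exI[of _ 1]) auto
next
  case (Suc d)
  then obtain Q where Q: "degree Q \<le> d" "coeff Q 0 = 1" "\<forall>r\<in>{1..d}. coeff (Q * R) r = a r" by blast
  define c where "c = a (Suc d) - coeff (Q * R) (Suc d)"
  define Q' where "Q' = Q + monom c (Suc d)"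
  have "degree Q' \<le> Suc d" unfolding Q'_def
    using Q(1) by (intro degree_add_le) (auto simp: degree_monom_le intro: order.trans[OF degree_monom_le])
  moreover have "coeff Q' 0 = 1" using Q(2) by (simp add: Q'_def)
  moreover have "\<forall>r\<in>{1..Suc d}. coeff (Q' * R) r = a r"
  proof
    fix r assume r: "r \<in> {1..Suc d}"
    have e: "coeff (Q' * R) r = coeff (Q * R) r + (if Suc d \<le> r then c * coeff R (r - Suc d) else 0)"
      by (simp add: Q'_def distrib_right coeff_monom_mult)
    show "coeff (Q' * R) r = a r"
    proof (cases "r = Suc d")
      case True then show ?thesis using e R0 by (simp add: c_def)
    next
      case False then show ?thesis using e r Q(3) by auto
    qed
  qed
  ultimately show ?case by blast
qed

lemma realize:
  fixes Q :: "'a::alg_closed_field poly"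
  assumes Q0: "coeff Q 0 = 1" and dQ: "degree Q \<le> d"
  shows "\<exists>xs. length xs = d \<and> PL xs = Q"
proof -
  have "Q \<noteq> 0" using Q0 by auto
  then obtain A where A: "size A = degree Q" "Q = smult (lead_coeff Q) (\<Prod>x\<in>#A. [:-x, 1:])"
    using alg_closed_imp_factorization by blast
  obtain zs where zs: "mset zs = A" using ex_mset by blast
  have Qz: "Q = smult (lead_coeff Q) (prod_list (map (\<lambda>x. [:-x, 1:]) zs))"
    using A(2) zs by (metis mset_map prod_mset_prod_list)
  have nz: "z \<noteq> 0" if "z \<in> set zs" for z
  proof
    assume "z = 0"
    have "poly (prod_list (map (\<lambda>x. [:-x,1:]) zs)) 0 = 0" using that \<open>z = 0\<close>
      by (induction zs) auto
    then have "poly Q 0 = 0" by (subst Qz) simp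
    then show False using Q0 by (simp add: poly_0_coeff_0)
  qed
  define ws where "ws = map (\<lambda>z. -1/z) zs"
  have key: "(\<forall>z\<in>set zs. z \<noteq> 0) \<Longrightarrow> prod_list (map (\<lambda>x. [:-x, 1:]) zs) = smult (prod_list (map uminus zs)) (PL (map (\<lambda>z. -1/z) zs))"
  proof (induction zs)
    case Nil then show ?case by (simp add: PL_def)
  next
    case (Cons z zs)
    have eq: "[:-z, 1:] = smult (-z) [:1, -1/z:]" using Cons.prems by simp
    have IH: "prod_list (map (\<lambda>x. [:-x, 1:]) zs) = smult (prod_list (map uminus zs)) (PL (map (\<lambda>z. -1/z) zs))"
      using Cons by simp
    have "prod_list (map (\<lambda>x. [:-x, 1:]) (z#zs)) = [:-z, 1:] * prod_list (map (\<lambda>x. [:-x, 1:]) zs)" by simp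
    also have "\<dots> = smult (-z) [:1, -1/z:] * smult (prod_list (map uminus zs)) (PL (map (\<lambda>z. -1/z) zs))"
      by (simp only: eq IH)
    also have "\<dots> = smult (-z * prod_list (map uminus zs)) ([:1, -1/z:] * PL (map (\<lambda>z. -1/z) zs))"
      by (simp only: mult_smult_left mult_smult_right smult_smult mult.commute)
    also have "\<dots> = smult (prod_list (map uminus (z#zs))) (PL (map (\<lambda>z. -1/z) (z#zs)))"
      by (simp only: PL_def list.map prod_list.Cons)
    finally show ?case .
  qed
  have Qw: "Q = smult (lead_coeff Q * prod_list (map uminus zs)) (PL ws)"
  proof -
    have "prod_list (map (\<lambda>x. [:-x, 1:]) zs) = smult (prod_list (map uminus zs)) (PL ws)"
      unfolding ws_def using key nz by blast
    then show ?thesis using Qz by (metis smult_smult)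
  qed
  have "coeff Q 0 = lead_coeff Q * prod_list (map uminus zs)"
    by (subst Qw) (simp add: PL_coeff0)
  then have "Q = PL ws" using Qw Q0 by simp
  have lw: "length ws = degree Q" using A(1) zs ws_def by auto
  have rep: "PL (replicate k 0) = 1" for k
    by (induction k) (simp_all add: PL_def one_pCons)
  show ?thesis
    by (rule exI[of _ "ws @ replicate (d - degree Q) 0"])
       (use lw dQ \<open>Q = PL ws\<close> rep in \<open>simp add: PL_append rep\<close>)
qed

lemma exist:
  fixes ys :: "'a::alg_closed_field list"
  shows "\<exists>xs. length xs = d \<and> (\<forall>r\<in>{1..d}. esym r (xs @ ys) = a r)"
proof -
  obtain Q where Q: "degree Q \<le> d" "coeff Q 0 = 1" "\<forall>r\<in>{1..d}. coeff (Q * PL ys) r = a r"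
    using triang[OF PL_coeff0[of ys], of d a] by blast
  obtain xs where xs: "length xs = d" "PL xs = Q" using realize[OF Q(2) Q(1)] by blast
  show ?thesis using xs Q(3) by (intro exI[of _ xs]) (simp add: esym_PL PL_append)
qed

definition newpart :: "(nat \<Rightarrow> nat) \<Rightarrow> (nat \<Rightarrow> nat \<Rightarrow> 'a::alg_closed_field) \<Rightarrow> nat \<Rightarrow> 'a list \<Rightarrow> 'a list" where
  "newpart p a i ys = (SOME xs. length xs = p (Suc i) - p i \<and>
      (\<forall>r\<in>{1..p (Suc i) - p i}. esym r (xs @ ys) = a (Suc i) r))"

lemma newpart:
  "length (newpart p a i ys) = p (Suc i) - p i \<and>
      (\<forall>r\<in>{1..p (Suc i) - p i}. esym r (newpart p a i ys @ ys) = a (Suc i) r)"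
  unfolding newpart_def by (rule someI_ex) (rule exist)

primrec rows :: "(nat \<Rightarrow> nat) \<Rightarrow> (nat \<Rightarrow> nat \<Rightarrow> 'a::alg_closed_field) \<Rightarrow> nat \<Rightarrow> 'a list" where
  "rows p a 0 = []"
| "rows p a (Suc i) = newpart p a i (rows p a i) @ rows p a i"

lemma rows_length:
  assumes "p 0 = 0" "\<And>i. 1 \<le> i \<Longrightarrow> i \<le> N \<Longrightarrow> p (i - 1) \<le> p i"
  shows "i \<le> N \<Longrightarrow> length (rows p a i) = p i"
proof (induction i)
  case 0 then show ?case using assms(1) by simp
next
  case (Suc i)
  have "p i \<le> p (Suc i)" using assms(2)[of "Suc i"] Suc.prems by simp
  then show ?case using Suc newpart[of p a i] by simp
qed


theorem mainTheorem8:
  fixes m n :: nat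
    and p :: "nat \<Rightarrow> nat"
    and par :: "nat \<Rightarrow> nat"
    and a :: "nat \<Rightarrow> nat \<Rightarrow> 'k::{alg_closed_field, field_char_0}"
  assumes p0: "p 0 = 0"
    and pmono: "\<And>i. 1 \<le> i \<Longrightarrow> i \<le> m + n \<Longrightarrow> p (i - 1) \<le> p i"
    and par01: "\<And>i. 1 \<le> i \<Longrightarrow> i \<le> m + n \<Longrightarrow> par i \<in> {0, 1}"
    and parcount: "card {i \<in> {1..m+n}. par i = 1} = n"
  shows "\<exists>b :: nat \<Rightarrow> nat \<Rightarrow> 'k.
     (\<forall>i\<in>{1..m+n}. \<forall>r\<in>{1..p (i - 1)}. b i (p i - p (i - 1) + r) = b (i - 1) r) \<and>
     (\<forall>i\<in>{1..m+n}. \<forall>r\<in>{1..p i - p (i - 1)}.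
        esym r (map (\<lambda>j. (-1) ^ par i * b i j) [1..<p i + 1]) = (-1) ^ (r * par i) * a i r)"
  proof -
  define b where "b i j = rows p a i ! (j - 1)" for i j
  have len: "i \<le> m + n \<Longrightarrow> length (rows p a i) = p i" for i
    using rows_length[of p "m+n", OF p0 pmono] by blast
  have row: "map (b i) [1..<p i + 1] = rows p a i" if "i \<le> m + n" for i
    using len[OF that] by (intro nth_equalityI) (auto simp: b_def nth_upt simp del: upt_Suc)
  have C1: "\<forall>i\<in>{1..m+n}. \<forall>r\<in>{1..p (i - 1)}. b i (p i - p (i - 1) + r) = b (i - 1) r"
  proof (intro ballI)
    fix i r assume i: "i \<in> {1..m+n}" and r: "r \<in> {1..p (i - 1)}"
    then obtain k where k: "i = Suc k" by (cases i) auto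
    have lk: "length (newpart p a k (rows p a k)) = p i - p (i - 1)" using newpart[of p a k] k by simp
    show "b i (p i - p (i - 1) + r) = b (i - 1) r"
    proof -
      have e: "p i - p (i - 1) + r - 1 = length (newpart p a k (rows p a k)) + (r - 1)"
        using lk r by simp
      have "rows p a i = newpart p a k (rows p a k) @ rows p a k" using k by simp
      then have "rows p a i ! (p i - p (i - 1) + r - 1) = rows p a k ! (r - 1)"
        by (simp only: e nth_append_length_plus)
      then show ?thesis using k by (simp add: b_def)
    qed
  qed
  have C2: "\<forall>i\<in>{1..m+n}. \<forall>r\<in>{1..p i - p (i - 1)}.
        esym r (map (\<lambda>j. (-1) ^ par i * b i j) [1..<p i + 1]) = (-1) ^ (r * par i) * a i r"
  proof (intro ballI)
    fix i r assume i: "i \<in> {1..m+n}" and r: "r \<in> {1..p i - p (i - 1)}"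
    then obtain k where k: "i = Suc k" by (cases i) auto
    have "map (\<lambda>j. (-1) ^ par i * b i j) [1..<p i + 1] = map (\<lambda>x. (-1) ^ par i * x) (rows p a i)"
    proof -
      have im: "i \<le> m + n" using i by simp
      have "map (\<lambda>j. (-1) ^ par i * b i j) [1..<p i + 1] = map (\<lambda>x. (-1) ^ par i * x) (map (b i) [1..<p i + 1])"
        by (simp only: map_map o_def)
      also have "\<dots> = map (\<lambda>x. (-1) ^ par i * x) (rows p a i)" by (simp only: row[OF im])
      finally show ?thesis .
    qed
    moreover have "esym r (rows p a i) = a i r" using newpart[of p a k "rows p a k"] r k by simp
    ultimately show "esym r (map (\<lambda>j. (-1) ^ par i * b i j) [1..<p i + 1]) = (-1) ^ (r * par i) * a i r"
    proof -
      assume h1: "map (\<lambda>j. (-1) ^ par i * b i j) [1..<p i + 1] = map (\<lambda>x. (-1) ^ par i * x) (rows p a i)"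
        and h2: "esym r (rows p a i) = a i r"
      have "(-1::'k) ^ (r * par i) = ((-1) ^ par i) ^ r"
        by (simp only: power_mult[symmetric] mult.commute)
      then show ?thesis by (simp only: h1 h2 esym_scale)
    qed
  qed
  show ?thesis using C1 C2 by blast
qed

end
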